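(* Assume Case (I) or Case (II) holds. Let $\mathbf y^\sharp$ be any solution of $\mathbf z=\mathbf H\mathbf y$, let $r>0$, and let $\mathcal M^\sharp(r)=\{\mathbf w\in\mathbb R^m:\|\mathbf w-\mathbf y^\sharp\|\le r\}$. Then, for any graph signal and weights satisfying the Weights Assumption and any $K>0$: (i) $(\mathcal M^\sharp(r))^N=\mathcal M^\sharp(r)\times\cdots\times\mathcal M^\sharp(r)$ is a positively invariant set for the "consensus + projection" flow; (ii) $(\mathcal M^\sharp(r))^N\cap(\mathcal A_1\times\cdots\times\mathcal A_N)$ is a positively invariant set for the "projection consensus" flow.
   Context: Setting: $N,m\ge 1$; $\mathbf H\in\mathbb R^{N\times m}$ has rows $\mathbf h_1^{T},\dots,\mathbf h_N^{T}$ with $\|\mathbf h_i\|=1$ for all $i$; $\mathbf z=(z_1,\dots,z_N)^T\in\mathbb R^N$; the equation is $\mathbf z=\mathbf H\mathbf y$. Let $\mathcal A_i=\{\mathbf y\in\mathbb R^m:\mathbf h_i^T\mathbf y=z_i\}$ with Euclidean projection $\mathcal P_{\mathcal A_i}(\mathbf y)=(I-\mathbf h_i\mathbf h_i^T)\mathbf y+z_i\mathbf h_i$. Case (I): $\mathrm{rank}(\mathbf H)=m$ and $\mathbf z$ in the column space of $\mathbf H$. Case (II): $\mathrm{rank}(\mathbf H)<m$ and $\mathbf z$ in the column space of $\mathbf H$. Network: $\mathrm V=\{1,\dots,N\}$; a graph signal assigns to each $t\ge0$ a digraph $\mathrm G_{\sigma(t)}=(\mathrm V,\mathrm E_{\sigma(t)})$,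 $\mathrm N_i(t)=\{j:(j,i)\in\mathrm E_{\sigma(t)}\}$; Weights Assumption: $a_{ij}:[0,\infty)\to(0,\infty)$ continuous except on a Lebesgue-null set and bounded by some $a^\ast>0$. Flows: "consensus + projection": $\dot{\mathbf x}_i=K\sum_{j\in\mathrm N_i(t)}a_{ij}(t)(\mathbf x_j-\mathbf x_i)+\mathcal P_{\mathcal A_i}(\mathbf x_i)-\mathbf x_i$; "projection consensus": $\dot{\mathbf x}_i=\sum_{j\in\mathrm N_i(t)}a_{ij}(t)\big(\mathcal P_{\mathcal A_i}(\mathbf x_j)-\mathcal P_{\mathcal A_i}(\mathbf x_i)\big)$, $i\in\mathrm V$. A set $\Omega\subset(\mathbb R^m)^N$ is positively invariant if every trajectory with $\mathbf x(t_0)\in\Omega$ satisfies $\mathbf x(t)\in\Omega$ for all $t\ge t_0$. *)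

theory Defs
  imports "HOL-Analysis.Analysis"
begin

text \<open>Nodes are indexed by a finite type 'n (N = CARD('n)), the state space
R^m is real^'m. Row i of H is H $ i, so h_i = H $ i.\<close>

definition projA :: "real^'m^'n \<Rightarrow> real^'n \<Rightarrow> 'n \<Rightarrow> real^'m \<Rightarrow> real^'m" where
  "projA H z i y = (y - (H $ i \<bullet> y) *\<^sub>R (H $ i)) + (z $ i) *\<^sub>R (H $ i)"

definition affA :: "real^'m^'n \<Rightarrow> real^'n \<Rightarrow> 'n \<Rightarrow> (real^'m) set" where
  "affA H z i = {y. H $ i \<bullet> y = z $ i}"

definition nbrs :: "(real \<Rightarrow> ('n \<times> 'n) set) \<Rightarrow> real \<Rightarrow> 'n \<Rightarrow> 'n set" where
  "nbrs E t i = {j. (j, i) \<in> E t}"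

definition weights_ok :: "('n \<Rightarrow> 'n \<Rightarrow> real \<Rightarrow> real) \<Rightarrow> bool" where
  "weights_ok a \<longleftrightarrow> (\<exists>astar>0. \<forall>i j.
      (\<forall>t\<ge>0. 0 < a i j t \<and> a i j t \<le> astar) \<and>
      (\<exists>S. S \<in> null_sets lborel \<and>
           (\<forall>t\<in>{0..} - S. continuous (at t within {0..}) (a i j))))"

definition cp_rhs :: "real \<Rightarrow> (real \<Rightarrow> ('n \<times> 'n) set) \<Rightarrow> ('n \<Rightarrow> 'n \<Rightarrow> real \<Rightarrow> real)
    \<Rightarrow> real^'m^'n \<Rightarrow> real^'n \<Rightarrow> real \<Rightarrow> real^'m^'n \<Rightarrow> real^'m^'n" where
  "cp_rhs K E a H z t x = (\<chi> i. K *\<^sub>R (\<Sum>j\<in>nbrs E t i. a i j t *\<^sub>R (x $ j - x $ i))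
                                + projA H z i (x $ i) - x $ i)"

definition pc_rhs :: "(real \<Rightarrow> ('n \<times> 'n) set) \<Rightarrow> ('n \<Rightarrow> 'n \<Rightarrow> real \<Rightarrow> real)
    \<Rightarrow> real^'m^'n \<Rightarrow> real^'n \<Rightarrow> real \<Rightarrow> real^'m^'n \<Rightarrow> real^'m^'n" where
  "pc_rhs E a H z t x = (\<chi> i. \<Sum>j\<in>nbrs E t i. a i j t *\<^sub>R (projA H z i (x $ j) - projA H z i (x $ i)))"

text \<open>A (Caratheodory) trajectory of dx/dt = F t x on [t0, infinity):
  x is the indefinite integral of t \<mapsto> F t (x t), i.e. absolutely continuous
  and satisfying the ODE almost everywhere.\<close>
definition is_traj :: "(real \<Rightarrow> 'v::euclidean_space \<Rightarrow> 'v) \<Rightarrow> real \<Rightarrow> (real \<Rightarrow> 'v) \<Rightarrow> bool" where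
  "is_traj F t0 x \<longleftrightarrow> (\<forall>t\<ge>t0. (\<lambda>s. F s (x s)) integrable_on {t0..t} \<and>
                         x t = x t0 + integral {t0..t} (\<lambda>s. F s (x s)))"

definition pos_invariant :: "(real \<Rightarrow> 'v::euclidean_space \<Rightarrow> 'v) \<Rightarrow> 'v set \<Rightarrow> bool" where
  "pos_invariant F \<Omega> \<longleftrightarrow> (\<forall>x t0. 0 \<le> t0 \<longrightarrow> is_traj F t0 x \<longrightarrow> x t0 \<in> \<Omega> \<longrightarrow> (\<forall>t\<ge>t0. x t \<in> \<Omega>))"

end

theory Submission
  imports Defs
begin


lemma int_nth:
  fixes f :: "real \<Rightarrow> real^'m^'n"
  assumes "f integrable_on S"
  shows "integral S (\<lambda>s. f s $ i) = integral S f $ i"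
    and "(\<lambda>s. f s $ i) integrable_on S"
proof -
  show "integral S (\<lambda>s. f s $ i) = integral S f $ i"
    using integral_linear[OF assms bounded_linear_vec_nth[of i]] by (simp add: o_def)
  show "(\<lambda>s. f s $ i) integrable_on S"
    using integrable_linear[OF assms bounded_linear_vec_nth[of i]] by (simp add: o_def)
qed

lemma abstract_inv:
  fixes F :: "real \<Rightarrow> real^'m^'n \<Rightarrow> real^'m^'n" and x :: "real \<Rightarrow> real^'m^'n" and c :: "real^'m"
  assumes traj: "is_traj F t0 x" and t0: "0 \<le> t0"
    and P: "\<forall>t\<ge>t0. x t \<in> P"
    and step: "\<And>\<tau> v h i \<rho>. 0 \<le> \<tau> \<Longrightarrow> v \<in> P \<Longrightarrow> 0 \<le> h \<Longrightarrow> h \<le> \<delta> \<Longrightarrow>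
          (\<forall>j. norm (v$j - c) \<le> \<rho>) \<Longrightarrow> norm (v$i - c + h *\<^sub>R F \<tau> v $ i) \<le> \<rho>"
    and lip: "\<And>\<tau> v w i \<mu>. 0 \<le> \<tau> \<Longrightarrow> (\<forall>j. norm (v$j - w$j) \<le> \<mu>) \<Longrightarrow>
          norm (F \<tau> v $ i - F \<tau> w $ i) \<le> L * \<mu>"
    and zero: "\<And>\<tau>. 0 \<le> \<tau> \<Longrightarrow> F \<tau> (\<chi> j. c) = 0"
    and dpos: "\<delta> > 0" and L: "L \<ge> 0"
    and init: "\<forall>i. norm (x t0 $ i - c) \<le> r"
  shows "\<forall>t\<ge>t0. \<forall>i. norm (x t $ i - c) \<le> r"
proof (intro allI impI)
  fix T i assume tT: "t0 \<le> T"
  define f where "f = (\<lambda>s. F s (x s))"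
  have intT: "f integrable_on {t0..T}" and xT: "x T = x t0 + integral {t0..T} f"
    using traj tT unfolding is_traj_def f_def by blast+
  have intsub: "f integrable_on {a..b}" if "t0 \<le> a" "b \<le> T" for a b
  proof (cases "a \<le> b")
    case True then show ?thesis using integrable_subinterval_real[OF intT] that by auto
  next
    case False then show ?thesis by (simp add: integrable_on_empty)
  qed
  have xeq: "x \<tau> = x t0 + integral {t0..\<tau>} f" if "\<tau> \<in> {t0..T}" for \<tau>
    using traj that unfolding is_traj_def f_def by (meson atLeastAtMost_iff)
  have cont: "continuous_on {t0..T} x"
  proof -
    have "continuous_on {t0..T} (\<lambda>\<tau>. x t0 + integral {t0..\<tau>} f)"
      by (rule continuous_on_add[OF continuous_on_const indefinite_integral_continuous_1[OF intT]])
    moreover have "continuous_on {t0..T} x = continuous_on {t0..T} (\<lambda>\<tau>. x t0 + integral {t0..\<tau>} f)"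
      by (rule continuous_on_cong) (rule refl, erule xeq)
    ultimately show ?thesis by simp
  qed
  then have "compact (x ` {t0..T})" by (intro compact_continuous_image) auto
  then have "bounded (x ` {t0..T})" by (rule compact_imp_bounded)
  then obtain B0 where "\<forall>y\<in>x ` {t0..T}. norm y \<le> B0" unfolding bounded_iff by blast
  then have B0: "\<And>\<tau>. \<tau> \<in> {t0..T} \<Longrightarrow> norm (x \<tau>) \<le> B0" by blast
  define B where "B = \<bar>B0\<bar> + norm c"
  have Bpos: "0 \<le> B" unfolding B_def by simp
  have ub: "norm (x \<tau> $ j - c) \<le> B" if "\<tau> \<in> {t0..T}" for \<tau> j
  proof -
    have "norm (x \<tau> $ j - c) \<le> norm (x \<tau> $ j) + norm c" by (rule norm_triangle_ineq4)
    also have "\<dots> \<le> norm (x \<tau>) + norm c" using Finite_Cartesian_Product.norm_nth_le[of "x \<tau>" j] by simp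
    also have "\<dots> \<le> B" using B0[OF that] unfolding B_def by simp
    finally show ?thesis .
  qed
  have fb: "norm (f \<tau> $ j) \<le> L * B" if "\<tau> \<in> {t0..T}" for \<tau> j
  proof -
    have "norm (F \<tau> (x \<tau>) $ j - F \<tau> (\<chi> j. c) $ j) \<le> L * B"
      using that t0 by (intro lip) (auto intro: ub)
    then show ?thesis using zero[of \<tau>] that t0 unfolding f_def by simp
  qed
  have incr: "x \<tau> - x s = integral {s..\<tau>} f" if "t0 \<le> s" "s \<le> \<tau>" "\<tau> \<le> T" for s \<tau>
  proof -
    have "integral {t0..s} f + integral {s..\<tau>} f = integral {t0..\<tau>} f"
      by (rule Henstock_Kurzweil_Integration.integral_combine) (use that in \<open>auto intro: intsub\<close>)
    then show ?thesis using xeq[of s] xeq[of \<tau>] that by (auto simp: algebra_simps)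
  qed
  have dist: "norm (x \<tau> $ j - x s $ j) \<le> L * B * (\<tau> - s)" if "t0 \<le> s" "s \<le> \<tau>" "\<tau> \<le> T" for s \<tau> j
  proof -
    have fi: "f integrable_on {s..\<tau>}" using that by (intro intsub) auto
    have "x \<tau> $ j - x s $ j = integral {s..\<tau>} (\<lambda>\<sigma>. f \<sigma> $ j)"
      using incr[OF that] int_nth(1)[OF fi] by (metis vector_minus_component)
    moreover have "((\<lambda>\<sigma>. f \<sigma> $ j) has_integral integral {s..\<tau>} (\<lambda>\<sigma>. f \<sigma> $ j)) {s..\<tau>}"
      using int_nth(2)[OF fi] by (simp add: integrable_integral)
    then have "norm (integral {s..\<tau>} (\<lambda>\<sigma>. f \<sigma> $ j)) \<le> L * B * Henstock_Kurzweil_Integration.content {s..\<tau>}"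
      using that by (intro has_integral_bound_real[where S="{}"]) (auto intro!: fb mult_nonneg_nonneg L Bpos)
    ultimately show ?thesis using that by simp
  qed
  define M where "M = L * L * B"
  have Mpos: "0 \<le> M" unfolding M_def using L Bpos by simp
  have stepM: "\<forall>i. norm (x t' $ i - c) \<le> \<rho> + M * (t' - s)^2"
    if st: "t0 \<le> s" "s \<le> t'" "t' \<le> T" "t' - s \<le> \<delta>" and hyp: "\<forall>i. norm (x s $ i - c) \<le> \<rho>" for s t' \<rho>
  proof
    fix i
    define h where "h = t' - s"
    have rpos: "0 \<le> \<rho>" using hyp by (meson norm_ge_zero order_trans)
    show "norm (x t' $ i - c) \<le> \<rho> + M * (t' - s)^2"
    proof (cases "h = 0")
      case True then have "t' = s" unfolding h_def by simp
      then show ?thesis using hyp Mpos by (simp add: add_increasing2)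
    next
      case False
      then have hpos: "h > 0" using st unfolding h_def by simp
      have fi: "f integrable_on {s..t'}" using st by (intro intsub) auto
      define g where "g = (\<lambda>\<sigma>. (x s $ i - c) + h *\<^sub>R f \<sigma> $ i)"
      have "(g has_integral (Henstock_Kurzweil_Integration.content {s..t'} *\<^sub>R (x s $ i - c) + h *\<^sub>R integral {s..t'} (\<lambda>\<sigma>. f \<sigma> $ i))) {s..t'}"
        unfolding g_def
        by (intro has_integral_add has_integral_const_real has_integral_cmul integrable_integral int_nth(2)[OF fi])
      then have gi: "(g has_integral (h *\<^sub>R (x t' $ i - c))) {s..t'}"
        using incr[OF st(1,2,3)] int_nth(1)[OF fi] st unfolding h_def
        by (simp add: algebra_simps)
      have gb: "norm (g \<sigma>) \<le> \<rho> + M * h^2" if "\<sigma> \<in> {s..t'}" for \<sigma>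
      proof -
        have s0: "0 \<le> \<sigma>" using that st t0 by auto
        have "g \<sigma> = (x s $ i - c + h *\<^sub>R F \<sigma> (x s) $ i) + h *\<^sub>R (F \<sigma> (x \<sigma>) $ i - F \<sigma> (x s) $ i)"
          unfolding g_def f_def by (simp add: algebra_simps)
        then have "norm (g \<sigma>) \<le> norm (x s $ i - c + h *\<^sub>R F \<sigma> (x s) $ i) + h * norm (F \<sigma> (x \<sigma>) $ i - F \<sigma> (x s) $ i)"
          using hpos by (metis norm_triangle_ineq norm_scaleR abs_of_pos)
        moreover have "norm (x s $ i - c + h *\<^sub>R F \<sigma> (x s) $ i) \<le> \<rho>"
          using step[OF s0 _ _ _ hyp] P st hpos unfolding h_def by auto
        moreover have "norm (F \<sigma> (x \<sigma>) $ i - F \<sigma> (x s) $ i) \<le> L * (L * B * h)"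
        proof (rule lip[OF s0], rule allI)
          fix j
          have "norm (x \<sigma> $ j - x s $ j) \<le> L * B * (\<sigma> - s)" using that st by (intro dist) auto
          also have "\<dots> \<le> L * B * h" using that L Bpos unfolding h_def by (intro mult_left_mono) auto
          finally show "norm (x \<sigma> $ j - x s $ j) \<le> L * B * h" .
        qed
        ultimately have "norm (g \<sigma>) \<le> \<rho> + h * (L * (L * B * h))"
          using hpos by (smt (verit) mult_left_mono)
        then show ?thesis unfolding M_def by (simp add: power2_eq_square algebra_simps)
      qed
      have "norm (h *\<^sub>R (x t' $ i - c)) \<le> (\<rho> + M * h^2) * Henstock_Kurzweil_Integration.content {s..t'}"
        using gi gb rpos Mpos by (intro has_integral_bound_real[where S="{}"]) auto
      then have "h * norm (x t' $ i - c) \<le> (\<rho> + M * h^2) * h"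
        using hpos st unfolding h_def by simp
      then show ?thesis using hpos unfolding h_def by (simp add: mult_le_cancel_right_pos mult.commute)
    qed
  qed
  show "norm (x T $ i - c) \<le> r"
  proof (rule ccontr)
    assume "\<not> ?thesis"
    then have eps: "norm (x T $ i - c) - r > 0" by simp
    define \<epsilon> where "\<epsilon> = norm (x T $ i - c) - r"
    obtain n :: nat where n: "(T - t0) / \<delta> + M * (T - t0)^2 / \<epsilon> + 1 < real n"
      using reals_Archimedean2 by blast
    have epos: "\<epsilon> > 0" using eps unfolding \<epsilon>_def .
    have q1: "(T - t0) / \<delta> \<ge> 0" using tT dpos by simp
    have q2: "M * (T - t0)^2 / \<epsilon> \<ge> 0" using Mpos epos by simp
    have npos: "real n > 0" using n q1 q2 by linarith
    define h where "h = (T - t0) / real n"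
    have hpos: "0 \<le> h" unfolding h_def using tT npos by simp
    have hd: "h \<le> \<delta>"
    proof -
      have "(T - t0) / \<delta> < real n" using n q2 by linarith
      then have "T - t0 < real n * \<delta>" using dpos by (simp add: divide_less_eq mult.commute)
      then show ?thesis unfolding h_def using npos by (simp add: divide_le_eq mult.commute)
    qed
    have iter: "k \<le> n \<longrightarrow> (\<forall>i. norm (x (t0 + real k * h) $ i - c) \<le> r + real k * M * h^2)" for k
    proof (induction k)
      case 0 then show ?case using init by simp
    next
      case (Suc k)
      show ?case
      proof
        assume kn: "Suc k \<le> n"
        have le: "real (Suc k) * h \<le> T - t0"
        proof -
          have "real (Suc k) * h \<le> real n * h" using kn hpos by (intro mult_right_mono) auto
          also have "\<dots> = T - t0" unfolding h_def using npos by simp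
          finally show ?thesis .
        qed
        have "\<forall>i. norm (x (t0 + real k * h + h) $ i - c) \<le> (r + real k * M * h^2) + M * ((t0 + real k * h + h) - (t0 + real k * h))^2"
          using Suc kn le hpos hd by (intro stepM) (auto simp: algebra_simps)
        then show "\<forall>i. norm (x (t0 + real (Suc k) * h) $ i - c) \<le> r + real (Suc k) * M * h^2"
          by (simp add: algebra_simps)
      qed
    qed
    have "t0 + real n * h = T" unfolding h_def using npos by simp
    then have "norm (x T $ i - c) \<le> r + real n * M * h^2" using iter[of n] by auto
    also have "real n * M * h^2 = M * (T - t0)^2 / real n"
      unfolding h_def using npos by (simp add: power2_eq_square field_simps)
    also have "M * (T - t0)^2 / real n < \<epsilon>"
    proof -
      have "M * (T - t0)^2 / \<epsilon> < real n" using n q1 by linarith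
      then have "M * (T - t0)^2 < real n * \<epsilon>" using epos by (simp add: divide_less_eq mult.commute)
      then show ?thesis using npos by (simp add: divide_less_eq mult.commute)
    qed
    finally show False unfolding \<epsilon>_def by simp
  qed
qed



lemma shrink:
  fixes b v :: "real^'m"
  assumes b: "norm b = 1" and h: "0 \<le> h" "h \<le> 2 * \<alpha>"
  shows "norm (\<alpha> *\<^sub>R v - (h * (b \<bullet> v)) *\<^sub>R b) \<le> \<alpha> * norm v"
proof -
  have al: "0 \<le> \<alpha>" using h by simp
  have bb: "b \<bullet> b = 1" using b by (simp add: dot_square_norm)
  define w where "w = \<alpha> *\<^sub>R v - (h * (b \<bullet> v)) *\<^sub>R b"
  have bv: "v \<bullet> b = b \<bullet> v" by (rule inner_commute)
  have ww: "w \<bullet> w = \<alpha>^2 * (v \<bullet> v) - h * (2 * \<alpha> - h) * (b \<bullet> v)^2"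
    unfolding w_def by (simp add: inner_diff_left inner_diff_right bb bv power2_eq_square algebra_simps)
  have "(norm (\<alpha> *\<^sub>R v - (h * (b \<bullet> v)) *\<^sub>R b))^2
      = \<alpha>^2 * (v \<bullet> v) - h * (2 * \<alpha> - h) * (b \<bullet> v)^2"
    using ww unfolding w_def by (simp only: power2_norm_eq_inner)
  also have "\<dots> \<le> \<alpha>^2 * (v \<bullet> v)" using h by (simp add: mult_nonneg_nonneg)
  also have "\<dots> = (\<alpha> * norm v)^2" by (simp add: power2_norm_eq_inner power_mult_distrib)
  finally show ?thesis using al by (simp add: power2_le_iff_abs_le)
qed

lemma proj_shrink:
  fixes b v :: "real^'m"
  assumes b: "norm b = 1"
  shows "norm (v - (b \<bullet> v) *\<^sub>R b) \<le> norm v"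
  using shrink[OF b, of 1 1 v] by simp

lemma nbrs_sum_le:
  assumes "\<And>j. 0 \<le> g j" "\<And>j. g j \<le> A"
  shows "(\<Sum>j\<in>nbrs E t (i::'n::finite). g j) \<le> real CARD('n) * A"
proof -
  have "(\<Sum>j\<in>nbrs E t i. g j) \<le> real (card (nbrs E t i)) * A"
    using sum_bounded_above[of "nbrs E t i" g A] assms by auto
  also have "\<dots> \<le> real CARD('n) * A"
    using assms(1,2)[of i] by (intro mult_right_mono) (auto intro: card_mono)
  finally show ?thesis .
qed

lemma projA_diff:
  "projA H z i y - projA H z i y' = (y - y') - ((H$i) \<bullet> (y - y')) *\<^sub>R H$i"
  unfolding projA_def by (simp add: algebra_simps inner_diff_right)



lemma cp_step:
  fixes H :: "real^'m^'n" and c :: "real^'m" and v :: "real^'m^'n"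
  assumes rows: "\<forall>i. norm (H $ i) = 1" and zc: "\<forall>i. z $ i = H $ i \<bullet> c"
    and K: "K > 0" and ab: "\<forall>i j. 0 < a i j \<tau> \<and> a i j \<tau> \<le> A"
    and h: "0 \<le> h" "h \<le> 1 / (K * A * real CARD('n) + 1)"
    and vb: "\<forall>j. norm (v$j - c) \<le> \<rho>"
  shows "norm (v$i - c + h *\<^sub>R cp_rhs K E a H z \<tau> v $ i) \<le> \<rho>"
proof -
  define Nb where "Nb = nbrs E \<tau> i"
  define e where "e j = v$j - c" for j
  define b where "b = H$i"
  define Se where "Se = (\<Sum>j\<in>Nb. a i j \<tau> *\<^sub>R e j)"
  define Sa where "Sa = (\<Sum>j\<in>Nb. a i j \<tau>)"
  have A0: "0 \<le> A" using ab by (meson less_le_trans order.strict_implies_order)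
  have Sa0: "0 \<le> Sa" unfolding Sa_def using ab by (simp add: less_imp_le sum_nonneg)
  have SaA: "Sa \<le> real CARD('n) * A" unfolding Sa_def Nb_def
    using ab by (intro nbrs_sum_le) (auto simp: less_imp_le)
  have s1: "(\<Sum>j\<in>Nb. a i j \<tau> *\<^sub>R (v$j - v$i)) = Se - Sa *\<^sub>R e i"
  proof -
    have "(\<Sum>j\<in>Nb. a i j \<tau> *\<^sub>R (v$j - v$i)) = (\<Sum>j\<in>Nb. a i j \<tau> *\<^sub>R e j - a i j \<tau> *\<^sub>R e i)"
      by (rule sum.cong) (auto simp: e_def algebra_simps)
    then show ?thesis unfolding Se_def Sa_def by (simp add: sum_subtractf scaleR_sum_left)
  qed
  have s2: "projA H z i (v$i) - v$i = - (b \<bullet> e i) *\<^sub>R b"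
    unfolding projA_def e_def b_def using zc by (simp add: algebra_simps inner_diff_right)
  have eq: "v$i - c + h *\<^sub>R cp_rhs K E a H z \<tau> v $ i
      = ((1 - h * (K * Sa)) *\<^sub>R e i - (h * (b \<bullet> e i)) *\<^sub>R b) + (h * K) *\<^sub>R Se"
  proof -
    have "cp_rhs K E a H z \<tau> v $ i = K *\<^sub>R (\<Sum>j\<in>Nb. a i j \<tau> *\<^sub>R (v$j - v$i)) + (projA H z i (v$i) - v$i)"
      unfolding cp_rhs_def Nb_def by (simp add: add_diff_eq)
    also have "\<dots> = K *\<^sub>R (Se - Sa *\<^sub>R e i) + (- (b \<bullet> e i) *\<^sub>R b)" by (simp only: s1 s2)
    finally have c1: "cp_rhs K E a H z \<tau> v $ i = K *\<^sub>R (Se - Sa *\<^sub>R e i) + (- (b \<bullet> e i) *\<^sub>R b)" .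
    have ei: "v$i - c = e i" by (simp add: e_def)
    show ?thesis unfolding c1 ei by (simp add: algebra_simps)
  qed
  have hb: "h * (K * Sa) + h \<le> 1"
  proof -
    have "K * Sa \<le> K * (real CARD('n) * A)" using SaA K by simp
    then have "h * (K * Sa) \<le> h * (K * (real CARD('n) * A))" using h(1) by (rule mult_left_mono)
    then have "h * (K * Sa) + h \<le> h * (K * A * real CARD('n) + 1)"
      by (simp add: algebra_simps)
    also have "\<dots> \<le> 1" using h K A0
      by (simp add: le_divide_eq mult.commute add_nonneg_pos)
    finally show ?thesis .
  qed
  have rho0: "0 \<le> \<rho>" using vb by (meson norm_ge_zero order_trans)
  have n1: "norm ((1 - h * (K * Sa)) *\<^sub>R e i - (h * (b \<bullet> e i)) *\<^sub>R b) \<le> (1 - h * (K * Sa)) * \<rho>"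
  proof -
    have "norm ((1 - h * (K * Sa)) *\<^sub>R e i - (h * (b \<bullet> e i)) *\<^sub>R b) \<le> (1 - h * (K * Sa)) * norm (e i)"
      using rows hb h unfolding b_def by (intro shrink) auto
    also have "\<dots> \<le> (1 - h * (K * Sa)) * \<rho>" using vb hb h unfolding e_def by (intro mult_left_mono) auto
    finally show ?thesis .
  qed
  have n2: "norm ((h * K) *\<^sub>R Se) \<le> h * K * (Sa * \<rho>)"
  proof -
    have "norm Se \<le> (\<Sum>j\<in>Nb. norm (a i j \<tau> *\<^sub>R e j))" unfolding Se_def by (rule norm_sum)
    also have "\<dots> \<le> (\<Sum>j\<in>Nb. a i j \<tau> * \<rho>)"
      using ab vb by (intro sum_mono) (auto simp: e_def abs_of_pos intro!: mult_left_mono less_imp_le)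
    also have "\<dots> = Sa * \<rho>" unfolding Sa_def by (simp add: sum_distrib_right)
    finally show ?thesis using h K by (simp add: abs_of_nonneg mult_left_mono)
  qed
  have "norm (v$i - c + h *\<^sub>R cp_rhs K E a H z \<tau> v $ i) \<le> (1 - h * (K * Sa)) * \<rho> + h * K * (Sa * \<rho>)"
    unfolding eq using n1 n2 norm_triangle_ineq by (smt (verit))
  also have "\<dots> = \<rho>" by (simp add: algebra_simps)
  finally show ?thesis .
qed

lemma cp_lip:
  fixes H :: "real^'m^'n" and v w :: "real^'m^'n"
  assumes rows: "\<forall>i. norm (H $ i) = 1"
    and K: "K > 0" and ab: "\<forall>i j. 0 < a i j \<tau> \<and> a i j \<tau> \<le> A"
    and vb: "\<forall>j. norm (v$j - w$j) \<le> \<mu>"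
  shows "norm (cp_rhs K E a H z \<tau> v $ i - cp_rhs K E a H z \<tau> w $ i) \<le> (2 * K * A * real CARD('n) + 1) * \<mu>"
proof -
  define Nb where "Nb = nbrs E \<tau> i"
  define d where "d j = v$j - w$j" for j
  define b where "b = H$i"
  have A0: "0 \<le> A" using ab by (meson less_le_trans order.strict_implies_order)
  have mu0: "0 \<le> \<mu>" using vb by (meson norm_ge_zero order_trans)
  have eq: "cp_rhs K E a H z \<tau> v $ i - cp_rhs K E a H z \<tau> w $ i
     = K *\<^sub>R (\<Sum>j\<in>Nb. a i j \<tau> *\<^sub>R (d j - d i)) - (b \<bullet> d i) *\<^sub>R b"
  proof -
    have s1': "(\<Sum>j\<in>Nb. a i j \<tau> *\<^sub>R (v $ j - v $ i)) - (\<Sum>j\<in>Nb. a i j \<tau> *\<^sub>R (w $ j - w $ i))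
        = (\<Sum>j\<in>Nb. a i j \<tau> *\<^sub>R (d j - d i))"
      unfolding sum_subtractf[symmetric] by (rule sum.cong) (auto simp: d_def algebra_simps)
    have s2': "(projA H z i (v$i) - v$i) - (projA H z i (w$i) - w$i) = - (b \<bullet> d i) *\<^sub>R b"
      unfolding projA_def d_def b_def by (simp add: algebra_simps inner_diff_right)
    have arr: "(K *\<^sub>R X + P1 - v1) - (K *\<^sub>R Y + P2 - w1) = K *\<^sub>R (X - Y) + ((P1 - v1) - (P2 - w1))"
      for X Y P1 P2 v1 w1 :: "real^'m" by (simp add: algebra_simps)
    show ?thesis unfolding cp_rhs_def vec_lambda_beta arr Nb_def s1'[unfolded Nb_def] s2' by simp
  qed
  have n1: "norm (\<Sum>j\<in>Nb. a i j \<tau> *\<^sub>R (d j - d i)) \<le> real CARD('n) * (2 * A * \<mu>)"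
  proof -
    have "norm (\<Sum>j\<in>Nb. a i j \<tau> *\<^sub>R (d j - d i)) \<le> (\<Sum>j\<in>Nb. norm (a i j \<tau> *\<^sub>R (d j - d i)))"
      by (rule norm_sum)
    also have "\<dots> \<le> (\<Sum>j\<in>Nb. 2 * A * \<mu>)"
    proof (rule sum_mono)
      fix j
      have "norm (d j - d i) \<le> 2 * \<mu>" using vb unfolding d_def
        by (smt (verit) norm_triangle_ineq4)
      then have "a i j \<tau> * norm (d j - d i) \<le> A * (2 * \<mu>)"
        using ab mu0 A0 by (intro mult_mono) (auto simp: less_imp_le)
      then show "norm (a i j \<tau> *\<^sub>R (d j - d i)) \<le> 2 * A * \<mu>" using ab by (simp add: abs_of_pos)
    qed
    also have "\<dots> \<le> real CARD('n) * (2 * A * \<mu>)" unfolding Nb_def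
      using A0 mu0 by (intro nbrs_sum_le) auto
    finally show ?thesis .
  qed
  have n2: "norm ((b \<bullet> d i) *\<^sub>R b) \<le> \<mu>"
  proof -
    have "\<bar>b \<bullet> d i\<bar> \<le> norm b * norm (d i)" by (rule Cauchy_Schwarz_ineq2)
    then show ?thesis using rows vb unfolding b_def d_def by (simp) (smt (verit))
  qed
  have "norm (cp_rhs K E a H z \<tau> v $ i - cp_rhs K E a H z \<tau> w $ i) \<le> K * (real CARD('n) * (2 * A * \<mu>)) + \<mu>"
    unfolding eq using n1 n2 K norm_triangle_ineq4 mult_left_mono
    by (smt (verit, ccfv_SIG) norm_scaleR abs_of_pos)
  then show ?thesis by (simp add: algebra_simps)
qed

lemma bP: "norm (H$i) = 1 \<Longrightarrow> H$i \<bullet> projA H z i y = z$i"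
  unfolding projA_def by (simp add: inner_diff_right inner_add_right dot_square_norm)

lemma pc_inner:
  fixes H :: "real^'m^'n"
  assumes rows: "\<forall>i. norm (H $ i) = 1"
  shows "H$i \<bullet> pc_rhs E a H z \<tau> v $ i = 0"
  unfolding pc_rhs_def using rows by (simp add: inner_sum_right inner_diff_right bP)

lemma pc_step:
  fixes H :: "real^'m^'n" and c :: "real^'m" and v :: "real^'m^'n"
  assumes rows: "\<forall>i. norm (H $ i) = 1" and zc: "\<forall>i. z $ i = H $ i \<bullet> c"
    and ab: "\<forall>i j. 0 < a i j \<tau> \<and> a i j \<tau> \<le> A"
    and h: "0 \<le> h" "h \<le> 1 / (A * real CARD('n) + 1)"
    and vP: "\<forall>k. v$k \<in> affA H z k"
    and vb: "\<forall>j. norm (v$j - c) \<le> \<rho>"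
  shows "norm (v$i - c + h *\<^sub>R pc_rhs E a H z \<tau> v $ i) \<le> \<rho>"
proof -
  define Nb where "Nb = nbrs E \<tau> i"
  define e where "e j = v$j - c" for j
  define b where "b = H$i"
  define q where "q j = e j - (b \<bullet> e j) *\<^sub>R b" for j
  define Sq where "Sq = (\<Sum>j\<in>Nb. a i j \<tau> *\<^sub>R q j)"
  define Sa where "Sa = (\<Sum>j\<in>Nb. a i j \<tau>)"
  have A0: "0 \<le> A" using ab by (meson less_le_trans order.strict_implies_order)
  have Sa0: "0 \<le> Sa" unfolding Sa_def using ab by (simp add: less_imp_le sum_nonneg)
  have SaA: "Sa \<le> real CARD('n) * A" unfolding Sa_def Nb_def
    using ab by (intro nbrs_sum_le) (auto simp: less_imp_le)
  have bvi: "b \<bullet> v$i = b \<bullet> c" using vP zc unfolding affA_def b_def by auto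
  have t: "projA H z i (v$j) - projA H z i (v$i) = q j - e i" for j
    unfolding projA_diff q_def e_def b_def[symmetric] using bvi
    by (simp add: inner_diff_right algebra_simps)
  have s1: "pc_rhs E a H z \<tau> v $ i = Sq - Sa *\<^sub>R e i"
  proof -
    have "pc_rhs E a H z \<tau> v $ i = (\<Sum>j\<in>Nb. a i j \<tau> *\<^sub>R (projA H z i (v$j) - projA H z i (v$i)))"
      unfolding pc_rhs_def Nb_def by simp
    also have "\<dots> = (\<Sum>j\<in>Nb. a i j \<tau> *\<^sub>R (q j - e i))" by (simp only: t)
    also have "\<dots> = (\<Sum>j\<in>Nb. a i j \<tau> *\<^sub>R q j - a i j \<tau> *\<^sub>R e i)"
      by (simp only: scaleR_right_diff_distrib)
    finally show ?thesis unfolding Sq_def Sa_def by (simp add: sum_subtractf scaleR_sum_left)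
  qed
  have eq: "v$i - c + h *\<^sub>R pc_rhs E a H z \<tau> v $ i = (1 - h * Sa) *\<^sub>R e i + h *\<^sub>R Sq"
    unfolding s1 by (simp add: e_def algebra_simps)
  have hb: "h * Sa \<le> 1"
  proof -
    have "h * Sa \<le> h * (real CARD('n) * A)" using SaA h(1) by (rule mult_left_mono)
    then have "h * Sa \<le> h * (A * real CARD('n) + 1)"
      using h(1) by (simp add: algebra_simps)
    also have "\<dots> \<le> 1" using h A0
      by (simp add: le_divide_eq mult.commute add_nonneg_pos)
    finally show ?thesis .
  qed
  have rho0: "0 \<le> \<rho>" using vb by (meson norm_ge_zero order_trans)
  have n1: "norm ((1 - h * Sa) *\<^sub>R e i) \<le> (1 - h * Sa) * \<rho>"
    using vb hb unfolding e_def by (simp add: mult_left_mono)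
  have n2: "norm (h *\<^sub>R Sq) \<le> h * (Sa * \<rho>)"
  proof -
    have "norm Sq \<le> (\<Sum>j\<in>Nb. norm (a i j \<tau> *\<^sub>R q j))" unfolding Sq_def by (rule norm_sum)
    also have "\<dots> \<le> (\<Sum>j\<in>Nb. a i j \<tau> * \<rho>)"
    proof (rule sum_mono)
      fix j
      have "norm (q j) \<le> norm (e j)" unfolding q_def b_def using rows by (intro proj_shrink) auto
      also have "\<dots> \<le> \<rho>" using vb unfolding e_def by auto
      finally show "norm (a i j \<tau> *\<^sub>R q j) \<le> a i j \<tau> * \<rho>"
        using ab by (auto simp: abs_of_pos intro!: mult_left_mono less_imp_le)
    qed
    also have "\<dots> = Sa * \<rho>" unfolding Sa_def by (simp add: sum_distrib_right)
    finally show ?thesis using h by (simp add: abs_of_nonneg mult_left_mono)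
  qed
  have "norm (v$i - c + h *\<^sub>R pc_rhs E a H z \<tau> v $ i) \<le> (1 - h * Sa) * \<rho> + h * (Sa * \<rho>)"
    unfolding eq using n1 n2 norm_triangle_ineq by (smt (verit))
  also have "\<dots> = \<rho>" by (simp add: algebra_simps)
  finally show ?thesis .
qed

lemma pc_lip:
  fixes H :: "real^'m^'n" and v w :: "real^'m^'n"
  assumes rows: "\<forall>i. norm (H $ i) = 1"
    and ab: "\<forall>i j. 0 < a i j \<tau> \<and> a i j \<tau> \<le> A"
    and vb: "\<forall>j. norm (v$j - w$j) \<le> \<mu>"
  shows "norm (pc_rhs E a H z \<tau> v $ i - pc_rhs E a H z \<tau> w $ i) \<le> (2 * A * real CARD('n)) * \<mu>"
proof -
  define Nb where "Nb = nbrs E \<tau> i"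
  define p where "p j = projA H z i (v$j) - projA H z i (w$j)" for j
  have A0: "0 \<le> A" using ab by (meson less_le_trans order.strict_implies_order)
  have mu0: "0 \<le> \<mu>" using vb by (meson norm_ge_zero order_trans)
  have pb: "norm (p j) \<le> \<mu>" for j
    unfolding p_def projA_diff using proj_shrink[of "H$i" "v$j - w$j"] rows vb by (meson order_trans)
  have eq: "pc_rhs E a H z \<tau> v $ i - pc_rhs E a H z \<tau> w $ i = (\<Sum>j\<in>Nb. a i j \<tau> *\<^sub>R (p j - p i))"
  proof -
    have "pc_rhs E a H z \<tau> v $ i - pc_rhs E a H z \<tau> w $ i =
       (\<Sum>j\<in>Nb. a i j \<tau> *\<^sub>R (projA H z i (v$j) - projA H z i (v$i))) -
       (\<Sum>j\<in>Nb. a i j \<tau> *\<^sub>R (projA H z i (w$j) - projA H z i (w$i)))"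
      unfolding pc_rhs_def Nb_def by simp
    also have "\<dots> = (\<Sum>j\<in>Nb. a i j \<tau> *\<^sub>R (p j - p i))"
      unfolding sum_subtractf[symmetric] by (rule sum.cong) (auto simp: p_def algebra_simps)
    finally show ?thesis .
  qed
  have "norm (\<Sum>j\<in>Nb. a i j \<tau> *\<^sub>R (p j - p i)) \<le> (\<Sum>j\<in>Nb. norm (a i j \<tau> *\<^sub>R (p j - p i)))"
    by (rule norm_sum)
  also have "\<dots> \<le> (\<Sum>j\<in>Nb. 2 * A * \<mu>)"
  proof (rule sum_mono)
    fix j
    have "norm (p j - p i) \<le> 2 * \<mu>" using pb[of j] pb[of i] by (smt (verit) norm_triangle_ineq4)
    then have "a i j \<tau> * norm (p j - p i) \<le> A * (2 * \<mu>)"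
      using ab mu0 A0 by (intro mult_mono) (auto simp: less_imp_le)
    then show "norm (a i j \<tau> *\<^sub>R (p j - p i)) \<le> 2 * A * \<mu>" using ab by (simp add: abs_of_pos)
  qed
  also have "\<dots> \<le> real CARD('n) * (2 * A * \<mu>)" unfolding Nb_def
    using A0 mu0 by (intro nbrs_sum_le) auto
  finally show ?thesis unfolding eq by (simp add: algebra_simps)
qed



theorem lemma6:
  fixes H :: "real^'m^'n" and z :: "real^'n" and ysharp :: "real^'m" and r K :: real
    and E :: "real \<Rightarrow> ('n \<times> 'n) set" and a :: "'n \<Rightarrow> 'n \<Rightarrow> real \<Rightarrow> real"
  assumes rows: "\<forall>i. norm (H $ i) = 1"
    and cases: "(rank H = CARD('m) \<and> z \<in> range (\<lambda>y. H *v y)) \<or>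
                (rank H < CARD('m) \<and> z \<in> range (\<lambda>y. H *v y))"
    and sol: "H *v ysharp = z"
    and r: "r > 0"
    and W: "weights_ok a"
    and K: "K > 0"
  shows "pos_invariant (cp_rhs K E a H z) {x. \<forall>i. norm (x $ i - ysharp) \<le> r}
       \<and> pos_invariant (pc_rhs E a H z)
           ({x. \<forall>i. norm (x $ i - ysharp) \<le> r} \<inter> {x. \<forall>i. x $ i \<in> affA H z i})"
proof -
  obtain A where A: "A > 0" and ab: "\<And>i j t. t \<ge> 0 \<Longrightarrow> 0 < a i j t \<and> a i j t \<le> A"
    using W unfolding weights_ok_def by blast
  have zc: "\<forall>i. z $ i = H $ i \<bullet> ysharp" using sol by (auto simp: matrix_vector_mul_component)
  have A0: "0 \<le> A" using A by simp
  have part1: "pos_invariant (cp_rhs K E a H z) {x. \<forall>i. norm (x $ i - ysharp) \<le> r}"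
    unfolding pos_invariant_def
  proof (intro allI impI)
    fix x :: "real \<Rightarrow> real^'m^'n" and t0 t :: real
    assume t0: "0 \<le> t0" and tr: "is_traj (cp_rhs K E a H z) t0 x"
      and x0: "x t0 \<in> {x. \<forall>i. norm (x $ i - ysharp) \<le> r}" and tt: "t0 \<le> t"
    have "\<forall>t\<ge>t0. \<forall>i. norm (x t $ i - ysharp) \<le> r"
    proof (rule abstract_inv[OF tr t0, where P=UNIV and \<delta>="1 / (K * A * real CARD('n) + 1)"
          and L="2 * K * A * real CARD('n) + 1"])
      show "\<forall>t\<ge>t0. x t \<in> UNIV" by simp
      show "norm (v $ i - ysharp + h *\<^sub>R cp_rhs K E a H z \<tau> v $ i) \<le> \<rho>"
        if "0 \<le> \<tau>" "v \<in> UNIV" "0 \<le> h" "h \<le> 1 / (K * A * real CARD('n) + 1)"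
          "\<forall>j. norm (v $ j - ysharp) \<le> \<rho>" for \<tau> v h i \<rho>
        using that by (intro cp_step[OF rows zc K]) (auto simp: ab)
      show "norm (cp_rhs K E a H z \<tau> v $ i - cp_rhs K E a H z \<tau> w $ i)
          \<le> (2 * K * A * real CARD('n) + 1) * \<mu>"
        if "0 \<le> \<tau>" "\<forall>j. norm (v $ j - w $ j) \<le> \<mu>" for \<tau> v w i \<mu>
        using that by (intro cp_lip[OF rows K]) (auto simp: ab)
      show "cp_rhs K E a H z \<tau> (\<chi> j. ysharp) = 0" for \<tau>
        unfolding cp_rhs_def projA_def using zc by (simp add: vec_eq_iff)
      show "0 < 1 / (K * A * real CARD('n) + 1)" using K A0 by (simp add: add_nonneg_pos)
      show "0 \<le> 2 * K * A * real CARD('n) + 1" using K A0 by simp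
      show "\<forall>i. norm (x t0 $ i - ysharp) \<le> r" using x0 by simp
    qed
    then show "x t \<in> {x. \<forall>i. norm (x $ i - ysharp) \<le> r}" using tt by simp
  qed
  have part2: "pos_invariant (pc_rhs E a H z)
           ({x. \<forall>i. norm (x $ i - ysharp) \<le> r} \<inter> {x. \<forall>i. x $ i \<in> affA H z i})"
    unfolding pos_invariant_def
  proof (intro allI impI)
    fix x :: "real \<Rightarrow> real^'m^'n" and t0 t :: real
    assume t0: "0 \<le> t0" and tr: "is_traj (pc_rhs E a H z) t0 x"
      and x0: "x t0 \<in> {x. \<forall>i. norm (x $ i - ysharp) \<le> r} \<inter> {x. \<forall>i. x $ i \<in> affA H z i}"
      and tt: "t0 \<le> t"
    define f where "f = (\<lambda>s. pc_rhs E a H z s (x s))"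
    have aff: "\<forall>t\<ge>t0. x t \<in> {v. \<forall>k. v $ k \<in> affA H z k}"
    proof (intro allI impI)
      fix t' assume tt': "t0 \<le> t'"
      have fi: "f integrable_on {t0..t'}" and xe: "x t' = x t0 + integral {t0..t'} f"
        using tr tt' unfolding is_traj_def f_def by blast+
      show "x t' \<in> {v. \<forall>k. v $ k \<in> affA H z k}"
      proof (clarify)
        fix k
        have fik: "(\<lambda>s. f s $ k) integrable_on {t0..t'}" by (rule int_nth(2)[OF fi])
        have z0: "(\<lambda>s. f s $ k \<bullet> H $ k) = (\<lambda>s. 0)"
          by (rule ext) (metis inner_commute pc_inner rows f_def)
        have "integral {t0..t'} f $ k \<bullet> H $ k = 0"
          using integral_component_eq[OF fik, of "H$k"] int_nth(1)[OF fi, of k] z0 by simp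
        moreover have "H $ k \<bullet> x t0 $ k = z $ k" using x0 unfolding affA_def by auto
        ultimately have "H $ k \<bullet> x t' $ k = z $ k"
          unfolding xe by (simp add: inner_add_right inner_commute)
        then show "x t' $ k \<in> affA H z k" unfolding affA_def by simp
      qed
    qed
    have "\<forall>t\<ge>t0. \<forall>i. norm (x t $ i - ysharp) \<le> r"
    proof (rule abstract_inv[OF tr t0 aff, where \<delta>="1 / (A * real CARD('n) + 1)"
          and L="2 * A * real CARD('n)"])
      show "norm (v $ i - ysharp + h *\<^sub>R pc_rhs E a H z \<tau> v $ i) \<le> \<rho>"
        if "0 \<le> \<tau>" "v \<in> {v. \<forall>k. v $ k \<in> affA H z k}" "0 \<le> h" "h \<le> 1 / (A * real CARD('n) + 1)"
          "\<forall>j. norm (v $ j - ysharp) \<le> \<rho>" for \<tau> v h i \<rho>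
        using that by (intro pc_step[OF rows zc]) (auto simp: ab)
      show "norm (pc_rhs E a H z \<tau> v $ i - pc_rhs E a H z \<tau> w $ i)
          \<le> (2 * A * real CARD('n)) * \<mu>"
        if "0 \<le> \<tau>" "\<forall>j. norm (v $ j - w $ j) \<le> \<mu>" for \<tau> v w i \<mu>
        using that by (intro pc_lip[OF rows]) (auto simp: ab)
      show "pc_rhs E a H z \<tau> (\<chi> j. ysharp) = 0" for \<tau>
        unfolding pc_rhs_def by (simp add: vec_eq_iff)
      show "0 < 1 / (A * real CARD('n) + 1)" using A0 by (simp add: add_nonneg_pos)
      show "0 \<le> 2 * A * real CARD('n)" using A0 by simp
      show "\<forall>i. norm (x t0 $ i - ysharp) \<le> r" using x0 by simp
    qed
    then show "x t \<in> {x. \<forall>i. norm (x $ i - ysharp) \<le> r} \<inter> {x. \<forall>i. x $ i \<in> affA H z i}"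
      using tt aff by simp
  qed
  show ?thesis using part1 part2 by blast
qed

end
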